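(* Let $n\ge2$, $V>0$, $c\in(0,\infty)$, and for $i,j\in[n]$ let $\Sigma_n^{\mathrm{sb}}$ have entries $\frac{V\pi}{i+j}$ and $\Sigma_n^{\mathrm{sp}}$ have entries $\frac{4V\pi^2}{(i+1)(j+1)}$. Let $\Sigma_n^{\mathrm{cr}}=\Sigma_n^{\mathrm{sb}}+c\Sigma_n^{\mathrm{sp}}$ if $c\le1$ and $\Sigma_n^{\mathrm{cr}}=\frac1c\Sigma_n^{\mathrm{sb}}+\Sigma_n^{\mathrm{sp}}$ if $c>1$. Let $\Sigma_n^{\mathrm{sb}}=L^{\mathrm{sb}}U^{\mathrm{sb}}$ be the (unique) LU decomposition of $\Sigma_n^{\mathrm{sb}}$ with $L^{\mathrm{sb}}$ unit lower triangular and $U^{\mathrm{sb}}$ upper triangular, and let $U^{\mathrm{sp}}=(u^{\mathrm{sp}}_{ij})$ be given by $u^{\mathrm{sp}}_{1j}=\frac{2V\pi^2}{j+1}$ and $u^{\mathrm{sp}}_{ij}=0$ for $i\ge2$ (so that $\Sigma_n^{\mathrm{sp}}=L^{\mathrm{sp}}U^{\mathrm{sp}}$ with $L^{\mathrm{sp}}$ unit lower triangular with first column $(2/(i+1))_i$ and zeros elsewhere below the diagonal). Then the (unique) LU decomposition $\Sigma_n^{\mathrm{cr}}=L^{\mathrm{cr}}U^{\mathrm{cr}}$ with $L^{\mathrm{cr}}$ unit lower triangular satisfies: (i) for $c\in(0,1]$, $L^{\mathrm{cr}}=L^{\mathrm{sb}}$ and $U^{\mathrm{cr}}=U^{\mathrm{sb}}+cU^{\mathrm{sp}}$;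 (ii) for $c\in(1,\infty)$, $L^{\mathrm{cr}}=L^{\mathrm{sb}}$ and $U^{\mathrm{cr}}=\frac1cU^{\mathrm{sb}}+U^{\mathrm{sp}}$.
   Context: These are the subcritical, supercritical and critical asymptotic covariance matrices of the vector $(\tilde L_t^{(0)},\dots,\tilde L_t^{(n-1)})$ of normalized length power functionals of a random geometric graph in dimension $d=2$ ($\tau_i=i-1$, $\kappa_2=\pi$) on a window of volume $V$; $c=\lim t\delta_t^2$. $[n]=\{1,\dots,n\}$. *)

theory Defs
  imports Complex_Main
begin

text \<open>n x n real matrices are represented as functions nat => nat => real,
  indexed by [n] = {1..n}; entries outside [n] x [n] are irrelevant.\<close>

definition unit_lower_tri :: "nat \<Rightarrow> (nat \<Rightarrow> nat \<Rightarrow> real) \<Rightarrow> bool" where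
  "unit_lower_tri n L \<longleftrightarrow>
     (\<forall>i\<in>{1..n}. \<forall>j\<in>{1..n}. (i < j \<longrightarrow> L i j = 0) \<and> (i = j \<longrightarrow> L i j = 1))"

definition upper_tri :: "nat \<Rightarrow> (nat \<Rightarrow> nat \<Rightarrow> real) \<Rightarrow> bool" where
  "upper_tri n U \<longleftrightarrow> (\<forall>i\<in>{1..n}. \<forall>j\<in>{1..n}. j < i \<longrightarrow> U i j = 0)"

definition mat_prod :: "nat \<Rightarrow> (nat \<Rightarrow> nat \<Rightarrow> real) \<Rightarrow> (nat \<Rightarrow> nat \<Rightarrow> real) \<Rightarrow> nat \<Rightarrow> nat \<Rightarrow> real" where
  "mat_prod n A B i j = (\<Sum>k=1..n. A i k * B k j)"

definition is_LU :: "nat \<Rightarrow> (nat \<Rightarrow> nat \<Rightarrow> real) \<Rightarrow> (nat \<Rightarrow> nat \<Rightarrow> real) \<Rightarrow> (nat \<Rightarrow> nat \<Rightarrow> real) \<Rightarrow> bool" where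
  "is_LU n A L U \<longleftrightarrow> unit_lower_tri n L \<and> upper_tri n U \<and>
     (\<forall>i\<in>{1..n}. \<forall>j\<in>{1..n}. A i j = mat_prod n L U i j)"

definition mat_eq :: "nat \<Rightarrow> (nat \<Rightarrow> nat \<Rightarrow> real) \<Rightarrow> (nat \<Rightarrow> nat \<Rightarrow> real) \<Rightarrow> bool" where
  "mat_eq n A B \<longleftrightarrow> (\<forall>i\<in>{1..n}. \<forall>j\<in>{1..n}. A i j = B i j)"

definition Sigma_sb :: "real \<Rightarrow> nat \<Rightarrow> nat \<Rightarrow> real" where
  "Sigma_sb V i j = V * pi / (real i + real j)"

definition Sigma_sp :: "real \<Rightarrow> nat \<Rightarrow> nat \<Rightarrow> real" where
  "Sigma_sp V i j = 4 * V * pi\<^sup>2 / ((real i + 1) * (real j + 1))"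

definition Sigma_cr :: "real \<Rightarrow> real \<Rightarrow> nat \<Rightarrow> nat \<Rightarrow> real" where
  "Sigma_cr V c i j = (if c \<le> 1 then Sigma_sb V i j + c * Sigma_sp V i j
                       else (1 / c) * Sigma_sb V i j + Sigma_sp V i j)"

definition U_sp :: "real \<Rightarrow> nat \<Rightarrow> nat \<Rightarrow> real" where
  "U_sp V i j = (if i = 1 then 2 * V * pi\<^sup>2 / (real j + 1) else 0)"

end

theory Submission imports Defs "HOL-Analysis.Analysis" "HOL-Computational_Algebra.Polynomial" begin

lemma int_pow: "((\<lambda>t::real. t ^ s) has_integral (1 / (real s + 1))) {0..1}"
proof -
  have "((\<lambda>t::real. t ^ s) has_integral (1 ^ Suc s / real (Suc s) - 0 ^ Suc s / real (Suc s))) {0..1}"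
  proof (rule fundamental_theorem_of_calculus)
    fix x :: real
    have "((\<lambda>t::real. t ^ Suc s / real (Suc s)) has_real_derivative x ^ s) (at x within {0..1})"
      using DERIV_cdivide[OF DERIV_pow[of "Suc s" x], of "real (Suc s)"]
      by (simp del: of_nat_Suc add: has_field_derivative_at_within)
    then show "((\<lambda>t::real. t ^ Suc s / real (Suc s)) has_vector_derivative x ^ s) (at x within {0..1})"
      by (simp add: has_real_derivative_iff_has_vector_derivative)
  qed simp
  then show ?thesis by (simp add: add.commute)
qed

lemma hilbert_pos:
  fixes w :: "nat \<Rightarrow> real"
  assumes k: "k \<ge> 1" and wk: "w k \<noteq> 0"
  shows "(\<Sum>i=1..k. \<Sum>j=1..k. w i * w j / (real i + real j)) > 0"
proof -
  define q where "q t = (\<Sum>i=1..k. w i * t ^ (i - 1))" for t :: real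
  define f where "f t = t * (q t)^2" for t :: real
  have feq: "f t = (\<Sum>i=1..k. \<Sum>j=1..k. w i * w j * t ^ (i - 1 + (j - 1) + 1))" for t
  proof -
    have "f t = t * (\<Sum>i=1..k. \<Sum>j=1..k. (w i * t ^ (i - 1)) * (w j * t ^ (j - 1)))"
      unfolding f_def q_def power2_eq_square sum_product by simp
    also have "\<dots> = (\<Sum>i=1..k. \<Sum>j=1..k. w i * w j * t ^ (i - 1 + (j - 1) + 1))"
      unfolding sum_distrib_left
    proof (intro sum.cong refl)
      fix i j assume "i \<in> {1..k}" "j \<in> {1..k}"
      then show "t * (w i * t ^ (i - 1) * (w j * t ^ (j - 1))) = w i * w j * t ^ (i - 1 + (j - 1) + 1)"
        by (cases i; cases j) (auto simp: power_add mult_ac)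
    qed
    finally show ?thesis .
  qed
  have "(f has_integral (\<Sum>i=1..k. \<Sum>j=1..k. w i * w j / (real i + real j))) {0..1}"
  proof -
    have "((\<lambda>t. (\<Sum>i=1..k. \<Sum>j=1..k. w i * w j * t ^ (i - 1 + (j - 1) + 1))) has_integral
        (\<Sum>i=1..k. \<Sum>j=1..k. w i * w j * (1 / (real (i - 1 + (j - 1) + 1) + 1)))) {0..1}"
      by (intro has_integral_sum has_integral_mult_right int_pow finite_atLeastAtMost)
    moreover have "(\<Sum>i=1..k. \<Sum>j=1..k. w i * w j * (1 / (real (i - 1 + (j - 1) + 1) + 1)))
       = (\<Sum>i=1..k. \<Sum>j=1..k. w i * w j / (real i + real j))"
      by (intro sum.cong refl) (auto simp: of_nat_diff)
    moreover have "f = (\<lambda>t. (\<Sum>i=1..k. \<Sum>j=1..k. w i * w j * t ^ (i - 1 + (j - 1) + 1)))"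
      using feq by (rule ext)
    ultimately show ?thesis by simp
  qed
  moreover have cont: "continuous_on {0..1} f" unfolding f_def q_def by (intro continuous_intros)
  moreover have nn: "\<And>t. t \<in> {0..1} \<Longrightarrow> f t \<ge> 0" unfolding f_def by simp
  ultimately have S: "(\<Sum>i=1..k. \<Sum>j=1..k. w i * w j / (real i + real j)) = integral {0..1} f"
    by (simp add: integral_unique)
  have ge: "integral {0..1} f \<ge> 0"
    by (rule integral_nonneg[OF integrable_continuous_real[OF cont]]) (use nn in auto)
  have "integral {0..1} f \<noteq> 0"
  proof
    assume "integral {0..1} f = 0"
    then have z: "\<forall>t\<in>{0..1}. f t = 0" using integral_eq_0_iff[OF cont _ nn] by simp
    define p where "p = (\<Sum>i=1..k. monom (w i) (i - 1))"
    have pq: "poly p t = q t" for t unfolding p_def q_def by (simp add: poly_sum poly_monom)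
    have "coeff p (k - 1) = (\<Sum>i=1..k. if i - 1 = k - 1 then w i else 0)"
      unfolding p_def by (simp add: coeff_sum coeff_monom)
    also have "\<dots> = (\<Sum>i\<in>{k}. w i)"
      using k by (intro sum.mono_neutral_cong_right) auto
    finally have "p \<noteq> 0" using wk by auto
    then have fin: "finite {t. poly p t = 0}" by (rule poly_roots_finite)
    have "{0<..1::real} \<subseteq> {t. poly p t = 0}"
    proof
      fix t :: real assume t: "t \<in> {0<..1}"
      then have "f t = 0" using z by auto
      with t show "t \<in> {t. poly p t = 0}" by (simp add: pq f_def)
    qed
    with fin have "finite {0<..1::real}" by (rule finite_subset[rotated])
    then show False using infinite_Ioc[of "0::real" 1] by simp
  qed
  with S ge show ?thesis by simp
qed

lemma LU_entry:
  assumes LU: "is_LU n A L U" and i: "i \<in> {1..n}" and j: "j \<in> {1..n}"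
  shows "A i j = (\<Sum>m\<in>{1..<min i j}. L i m * U m j) + L i (min i j) * U (min i j) j"
proof -
  have "A i j = (\<Sum>m=1..n. L i m * U m j)" using assms by (simp add: is_LU_def mat_prod_def)
  also have "\<dots> = (\<Sum>m=1..min i j. L i m * U m j)"
  proof (rule sum.mono_neutral_right)
    show "\<forall>m\<in>{1..n} - {1..min i j}. L i m * U m j = 0"
    proof
      fix m assume m: "m \<in> {1..n} - {1..min i j}"
      show "L i m * U m j = 0"
      proof (cases "i < m")
        case True then show ?thesis using LU i m by (auto simp: is_LU_def unit_lower_tri_def)
      next
        case False then have "j < m" using m by auto
        then show ?thesis using LU j m by (auto simp: is_LU_def upper_tri_def)
      qed
    qed
  qed (use i j in auto)
  also have "{1..min i j} = insert (min i j) {1..<min i j}" using i j by auto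
  finally show ?thesis by (simp add: add.commute)
qed

lemma LU_unique:
  assumes LU1: "is_LU n A L1 U1" and LU2: "is_LU n A L2 U2" and nz: "\<forall>k\<in>{1..n}. U1 k k \<noteq> 0"
  shows "mat_eq n L2 L1 \<and> mat_eq n U2 U1"
proof -
  have P: "i \<in> {1..n} \<Longrightarrow> (\<forall>j\<in>{1..n}. U2 i j = U1 i j \<and> L2 j i = L1 j i)" for i
  proof (induction i rule: less_induct)
    case (less i)
    have IH: "U2 m j = U1 m j \<and> L2 j m = L1 j m" if "m \<in> {1..<i}" "j \<in> {1..n}" for m j
      using less that by auto
    have U: "U2 i j = U1 i j" if j: "j \<in> {1..n}" for j
    proof (cases "j < i")
      case True then show ?thesis using LU1 LU2 less.prems j by (auto simp: is_LU_def upper_tri_def)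
    next
      case False
      then have mi: "min i j = i" by simp
      have e1: "A i j = (\<Sum>m\<in>{1..<i}. L1 i m * U1 m j) + L1 i i * U1 i j"
        using LU_entry[OF LU1 less.prems j] mi by simp
      have e2: "A i j = (\<Sum>m\<in>{1..<i}. L2 i m * U2 m j) + L2 i i * U2 i j"
        using LU_entry[OF LU2 less.prems j] mi by simp
      have s: "(\<Sum>m\<in>{1..<i}. L2 i m * U2 m j) = (\<Sum>m\<in>{1..<i}. L1 i m * U1 m j)"
        using IH less.prems j by (intro sum.cong) auto
      have "L1 i i = 1" "L2 i i = 1" using LU1 LU2 less.prems by (auto simp: is_LU_def unit_lower_tri_def)
      then show ?thesis using e1 e2 s by simp
    qed
    have L: "L2 j i = L1 j i" if j: "j \<in> {1..n}" for j
    proof (cases "j \<le> i")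
      case True then show ?thesis using LU1 LU2 less.prems j
        by (cases "j = i") (auto simp: is_LU_def unit_lower_tri_def)
    next
      case False
      then have mi: "min j i = i" by simp
      have e1: "A j i = (\<Sum>m\<in>{1..<i}. L1 j m * U1 m i) + L1 j i * U1 i i"
        using LU_entry[OF LU1 j less.prems] mi by simp
      have e2: "A j i = (\<Sum>m\<in>{1..<i}. L2 j m * U2 m i) + L2 j i * U2 i i"
        using LU_entry[OF LU2 j less.prems] mi by simp
      have s: "(\<Sum>m\<in>{1..<i}. L2 j m * U2 m i) = (\<Sum>m\<in>{1..<i}. L1 j m * U1 m i)"
        using IH less.prems j by (intro sum.cong) auto
      have "U2 i i = U1 i i" using U less.prems by simp
      moreover have "U1 i i \<noteq> 0" using nz less.prems by simp
      ultimately show ?thesis using e1 e2 s by simp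
    qed
    show ?case using U L by simp
  qed
  show ?thesis using P by (auto simp: mat_eq_def)
qed

lemma solve_lower:
  assumes "unit_lower_tri n L"
  shows "k \<le> n \<Longrightarrow> \<exists>w. \<forall>j\<in>{1..k}. (\<Sum>m=1..k. w m * L m j) = b j"
proof (induction k arbitrary: b)
  case 0 then show ?case by simp
next
  case (Suc k)
  obtain w where w: "\<forall>j\<in>{1..k}. (\<Sum>m=1..k. w m * L m j) = b j - b (Suc k) * L (Suc k) j"
    using Suc by fastforce
  define w' where "w' = w(Suc k := b (Suc k))"
  have sw: "(\<Sum>m=1..Suc k. w' m * L m j) = (\<Sum>m=1..k. w m * L m j) + b (Suc k) * L (Suc k) j" for j
  proof -
    have "(\<Sum>m=1..Suc k. w' m * L m j) = (\<Sum>m=1..k. w' m * L m j) + w' (Suc k) * L (Suc k) j"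
      by simp
    moreover have "(\<Sum>m=1..k. w' m * L m j) = (\<Sum>m=1..k. w m * L m j)"
      unfolding w'_def by (intro sum.cong) auto
    ultimately show ?thesis by (simp add: w'_def)
  qed
  have "\<forall>j\<in>{1..Suc k}. (\<Sum>m=1..Suc k. w' m * L m j) = b j"
  proof
    fix j assume j: "j \<in> {1..Suc k}"
    show "(\<Sum>m=1..Suc k. w' m * L m j) = b j"
    proof (cases "j = Suc k")
      case True
      have "(\<Sum>m=1..k. w m * L m j) = 0"
        using assms Suc.prems True by (intro sum.neutral) (auto simp: unit_lower_tri_def)
      moreover have "L (Suc k) j = 1" using assms Suc.prems True unfolding unit_lower_tri_def
        by (metis atLeastAtMost_iff le_add1 plus_1_eq_Suc)
      ultimately show ?thesis using True by (subst sw) simp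
    next
      case False
      then show ?thesis using sw w j by simp
    qed
  qed
  then show ?case by blast
qed

lemma diag_nz:
  assumes LU: "is_LU n (Sigma_sb V) L U" and V: "V > 0" and k: "k \<in> {1..n}"
  shows "U k k \<noteq> 0"
proof
  assume Ukk: "U k k = 0"
  have ul: "unit_lower_tri n L" using LU by (simp add: is_LU_def)
  obtain w where w: "\<forall>j\<in>{1..k}. (\<Sum>m=1..k. w m * L m j) = (if j = k then 1 else 0)"
    using solve_lower[OF ul, of k "\<lambda>j. if j = k then 1 else 0"] k by auto
  have wk: "w k = 1"
  proof -
    have "(\<Sum>m=1..k. w m * L m k) = 1" using w k by auto
    moreover have "(\<Sum>m=1..k. w m * L m k) = (\<Sum>m\<in>{k}. w m * L m k)"
      using ul k by (intro sum.mono_neutral_right) (auto simp: unit_lower_tri_def)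
    moreover have "L k k = 1" using ul k by (auto simp: unit_lower_tri_def)
    ultimately show ?thesis by simp
  qed
  have row: "(\<Sum>i=1..k. w i * Sigma_sb V i j) = 0" if j: "j \<in> {1..k}" for j
  proof -
    have "Sigma_sb V i j = (\<Sum>m=1..k. L i m * U m j)" if i: "i \<in> {1..k}" for i
    proof -
      have "Sigma_sb V i j = (\<Sum>m=1..n. L i m * U m j)"
        using LU i j k by (simp add: is_LU_def mat_prod_def)
      also have "\<dots> = (\<Sum>m=1..k. L i m * U m j)"
        using ul i k by (intro sum.mono_neutral_right) (auto simp: unit_lower_tri_def)
      finally show ?thesis .
    qed
    then have "(\<Sum>i=1..k. w i * Sigma_sb V i j) = (\<Sum>i=1..k. \<Sum>m=1..k. w i * L i m * U m j)"
      by (simp add: sum_distrib_left mult_ac)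
    also have "\<dots> = (\<Sum>m=1..k. (\<Sum>i=1..k. w i * L i m) * U m j)"
      by (subst sum.swap) (simp add: sum_distrib_right)
    also have "\<dots> = (\<Sum>m=1..k. (if m = k then 1 else 0) * U m j)"
      using w by (intro sum.cong) auto
    also have "\<dots> = (\<Sum>m=1..k. if m = k then U m j else 0)"
      by (intro sum.cong) auto
    also have "\<dots> = U k j" using k by (simp add: sum.delta')
    also have "\<dots> = 0"
      using Ukk LU j k by (cases "j = k") (auto simp: is_LU_def upper_tri_def)
    finally show ?thesis .
  qed
  have "(\<Sum>i=1..k. \<Sum>j=1..k. w i * w j * Sigma_sb V i j) = (\<Sum>j=1..k. w j * (\<Sum>i=1..k. w i * Sigma_sb V i j))"
    by (subst sum.swap) (simp add: sum_distrib_left mult_ac)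
  also have "\<dots> = 0" using row by simp
  finally have z: "(\<Sum>i=1..k. \<Sum>j=1..k. w i * w j * Sigma_sb V i j) = 0" .
  have "(\<Sum>i=1..k. \<Sum>j=1..k. w i * w j * Sigma_sb V i j) = (V * pi) * (\<Sum>i=1..k. \<Sum>j=1..k. w i * w j / (real i + real j))"
    unfolding Sigma_sb_def sum_distrib_left by (intro sum.cong refl) (auto simp: field_simps)
  moreover have "(\<Sum>i=1..k. \<Sum>j=1..k. w i * w j / (real i + real j)) > 0"
    using hilbert_pos[of k w] k wk by simp
  ultimately show False using z V by simp
qed

lemma cr_LU:
  assumes LU: "is_LU n (Sigma_sb V) L U" and V: "V > 0" and a: "a > 0" and b: "b \<ge> 0"
  shows "is_LU n (\<lambda>i j. a * Sigma_sb V i j + b * Sigma_sp V i j) L (\<lambda>i j. a * U i j + b * U_sp V i j)"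
    and "\<forall>k\<in>{1..n}. a * U k k + b * U_sp V k k \<noteq> 0"
proof -
  have U11: "U 1 1 = V * pi / 2" if n: "n \<ge> 1"
  proof -
    have "Sigma_sb V 1 1 = L 1 1 * U 1 1" using LU_entry[OF LU, of 1 1] n by simp
    moreover have m: "(1::nat) \<in> {1..n}" using n by simp
    moreover have "L 1 1 = 1" using LU m unfolding is_LU_def unit_lower_tri_def by blast
    ultimately show ?thesis by (simp add: Sigma_sb_def)
  qed
  have Li1: "L i 1 = 2 / (real i + 1)" if i: "i \<in> {1..n}" for i
  proof -
    have "Sigma_sb V i 1 = L i 1 * U 1 1" using LU_entry[OF LU, of i 1] i by simp
    then have "V * pi / (real i + 1) = L i 1 * (V * pi / 2)" using U11 i by (simp add: Sigma_sb_def)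
    then have "(V * pi) * 2 = (V * pi) * (L i 1 * (real i + 1))" by (simp add: field_simps)
    moreover have "V * pi \<noteq> 0" using V by simp
    ultimately have "2 = L i 1 * (real i + 1)" by (metis mult_left_cancel)
    then show ?thesis by (simp add: field_simps)
  qed
  have sp: "mat_prod n L (U_sp V) i j = Sigma_sp V i j" if i: "i \<in> {1..n}" and j: "j \<in> {1..n}" for i j
  proof -
    have "mat_prod n L (U_sp V) i j = (\<Sum>m=1..n. if m = 1 then L i 1 * (2 * V * pi\<^sup>2 / (real j + 1)) else 0)"
      unfolding mat_prod_def U_sp_def by (intro sum.cong) auto
    also have "\<dots> = L i 1 * (2 * V * pi\<^sup>2 / (real j + 1))" using i by (simp add: sum.delta)
    also have "\<dots> = Sigma_sp V i j"
    proof -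
      have "real i + 1 \<noteq> 0" "real j + 1 \<noteq> 0" by linarith+
      then show ?thesis unfolding Li1[OF i] Sigma_sp_def by (simp add: field_simps)
    qed
    finally show ?thesis .
  qed
  have prod: "mat_prod n L (\<lambda>i j. a * U i j + b * U_sp V i j) i j = a * mat_prod n L U i j + b * mat_prod n L (U_sp V) i j" for i j
    unfolding mat_prod_def by (simp add: distrib_left sum.distrib sum_distrib_left mult_ac)
  show "is_LU n (\<lambda>i j. a * Sigma_sb V i j + b * Sigma_sp V i j) L (\<lambda>i j. a * U i j + b * U_sp V i j)"
    unfolding is_LU_def
  proof (intro conjI ballI)
    show "unit_lower_tri n L" using LU by (simp add: is_LU_def)
    show "upper_tri n (\<lambda>i j. a * U i j + b * U_sp V i j)"
      using LU by (auto simp: is_LU_def upper_tri_def U_sp_def)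
    fix i j assume i: "i \<in> {1..n}" and j: "j \<in> {1..n}"
    have "Sigma_sb V i j = mat_prod n L U i j" using LU i j by (simp add: is_LU_def)
    then show "a * Sigma_sb V i j + b * Sigma_sp V i j = mat_prod n L (\<lambda>i j. a * U i j + b * U_sp V i j) i j"
      using prod sp[OF i j] by simp
  qed
  show "\<forall>k\<in>{1..n}. a * U k k + b * U_sp V k k \<noteq> 0"
  proof
    fix k assume k: "k \<in> {1..n}"
    show "a * U k k + b * U_sp V k k \<noteq> 0"
    proof (cases "k = 1")
      case True
      have "U k k = V * pi / 2" using U11 k True by simp
      moreover have "V * pi / 2 > 0" using V by simp
      ultimately have "U k k > 0" by simp
      then have "a * U k k > 0" using a by simp
      moreover have "b * U_sp V k k \<ge> 0" using True b V by (simp add: U_sp_def)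
      ultimately show ?thesis by linarith
    next
      case False
      then show ?thesis using diag_nz[OF LU V k] a by (simp add: U_sp_def)
    qed
  qed
qed

theorem theorem8p1:
  fixes n :: nat and V c :: real and L_sb U_sb :: "nat \<Rightarrow> nat \<Rightarrow> real"
  assumes "n \<ge> 2" and "V > 0" and "c > 0"
    and "is_LU n (Sigma_sb V) L_sb U_sb"
  shows "(c \<le> 1 \<longrightarrow>
            is_LU n (Sigma_cr V c) L_sb (\<lambda>i j. U_sb i j + c * U_sp V i j) \<and>
            (\<forall>L U. is_LU n (Sigma_cr V c) L U \<longrightarrow>
               mat_eq n L L_sb \<and> mat_eq n U (\<lambda>i j. U_sb i j + c * U_sp V i j)))
       \<and> (1 < c \<longrightarrow>
            is_LU n (Sigma_cr V c) L_sb (\<lambda>i j. (1 / c) * U_sb i j + U_sp V i j) \<and>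
            (\<forall>L U. is_LU n (Sigma_cr V c) L U \<longrightarrow>
               mat_eq n L L_sb \<and> mat_eq n U (\<lambda>i j. (1 / c) * U_sb i j + U_sp V i j)))"
proof (intro conjI impI)
  assume c1: "c \<le> 1"
  have eq: "Sigma_cr V c = (\<lambda>i j. 1 * Sigma_sb V i j + c * Sigma_sp V i j)"
    using c1 by (simp add: fun_eq_iff Sigma_cr_def)
  have eqU: "(\<lambda>i j. U_sb i j + c * U_sp V i j) = (\<lambda>i j. 1 * U_sb i j + c * U_sp V i j)" by simp
  note r = cr_LU[OF assms(4) assms(2), of 1 c]
  show "is_LU n (Sigma_cr V c) L_sb (\<lambda>i j. U_sb i j + c * U_sp V i j)"
    using r assms(3) unfolding eq eqU by simp
  show "\<forall>L U. is_LU n (Sigma_cr V c) L U \<longrightarrow> mat_eq n L L_sb \<and> mat_eq n U (\<lambda>i j. U_sb i j + c * U_sp V i j)"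
    using LU_unique[of n "Sigma_cr V c" L_sb "\<lambda>i j. U_sb i j + c * U_sp V i j"] r assms(3)
    unfolding eq eqU by simp
next
  assume c1: "1 < c"
  have eq: "Sigma_cr V c = (\<lambda>i j. (1 / c) * Sigma_sb V i j + 1 * Sigma_sp V i j)"
    using c1 by (simp add: fun_eq_iff Sigma_cr_def)
  have eqU: "(\<lambda>i j. (1 / c) * U_sb i j + U_sp V i j) = (\<lambda>i j. (1 / c) * U_sb i j + 1 * U_sp V i j)" by simp
  note r = cr_LU[OF assms(4) assms(2), of "1 / c" 1]
  show "is_LU n (Sigma_cr V c) L_sb (\<lambda>i j. (1 / c) * U_sb i j + U_sp V i j)"
    using r assms(3) unfolding eq eqU by simp
  show "\<forall>L U. is_LU n (Sigma_cr V c) L U \<longrightarrow> mat_eq n L L_sb \<and> mat_eq n U (\<lambda>i j. (1 / c) * U_sb i j + U_sp V i j)"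
    using LU_unique[of n "Sigma_cr V c" L_sb "\<lambda>i j. (1 / c) * U_sb i j + U_sp V i j"] r assms(3) c1
    unfolding eq eqU by simp
qed

end
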